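(* Let $F$ be a directed graph on a finite vertex set whose underlying undirected graph is simple, in which every node has out-degree at most $1$ (a directed pseudo-forest), and in which no pair of nodes is joined by edges in both directions. Let $w$ be positive edge weights and let $\chi:V(F)\to\{1,2,3\}$ be a proper coloring of the underlying undirected graph. Mark edges as follows: each node $x$ with $\chi(x)=1$ marks its outgoing edge (if it has one) when the weight of that edge is at least the sum of weights of all its incoming edges, and otherwise marks all its incoming edges; each node $x$ with $\chi(x)=2$ marks its outgoing edge if the head of that edge has color $3$ and its weight is at least the sum of the weights of the incoming edges of $x$ whose tails have color $3$, and otherwise marks all incoming edges of $x$ whose tails have color $3$; nodes of color $3$ mark nothing. Then the set of marked edges contains no cycle (its underlying undirected graph is a forest). *)

theory Defs
  imports Complex_Main
begin

text \<open>A directed graph is a finite vertex set V with an edge set E \<subseteq> V \<times> V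
  (edge (u,v) goes from tail u to head v).\<close>

definition in_weight :: "('a \<times> 'a) set \<Rightarrow> ('a \<times> 'a \<Rightarrow> real) \<Rightarrow> 'a \<Rightarrow> real" where
  "in_weight E w x = (\<Sum>e\<in>{e\<in>E. snd e = x}. w e)"

definition in_weight3 :: "('a \<times> 'a) set \<Rightarrow> ('a \<times> 'a \<Rightarrow> real) \<Rightarrow> ('a \<Rightarrow> nat) \<Rightarrow> 'a \<Rightarrow> real" where
  "in_weight3 E w \<chi> x = (\<Sum>e\<in>{e\<in>E. snd e = x \<and> \<chi> (fst e) = 3}. w e)"

definition marks_out :: "('a \<times> 'a) set \<Rightarrow> ('a \<times> 'a \<Rightarrow> real) \<Rightarrow> ('a \<Rightarrow> nat) \<Rightarrow> 'a \<Rightarrow> 'a \<Rightarrow> bool" where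
  "marks_out E w \<chi> x y \<longleftrightarrow> (x, y) \<in> E \<and>
     ((\<chi> x = 1 \<and> w (x, y) \<ge> in_weight E w x) \<or>
      (\<chi> x = 2 \<and> \<chi> y = 3 \<and> w (x, y) \<ge> in_weight3 E w \<chi> x))"

definition marked_edges :: "('a \<times> 'a) set \<Rightarrow> ('a \<times> 'a \<Rightarrow> real) \<Rightarrow> ('a \<Rightarrow> nat) \<Rightarrow> ('a \<times> 'a) set" where
  "marked_edges E w \<chi> =
     {(x, y). marks_out E w \<chi> x y}
     \<union> {(z, x). (z, x) \<in> E \<and> \<chi> x = 1 \<and> \<not> (\<exists>y. marks_out E w \<chi> x y)}
     \<union> {(z, x). (z, x) \<in> E \<and> \<chi> x = 2 \<and> \<chi> z = 3 \<and> \<not> (\<exists>y. marks_out E w \<chi> x y)}"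

definition uadj :: "('a \<times> 'a) set \<Rightarrow> 'a \<Rightarrow> 'a \<Rightarrow> bool" where
  "uadj M u v \<longleftrightarrow> (u, v) \<in> M \<or> (v, u) \<in> M"

definition has_undirected_cycle :: "('a \<times> 'a) set \<Rightarrow> bool" where
  "has_undirected_cycle M \<longleftrightarrow> (\<exists>xs. length xs \<ge> 3 \<and> distinct xs \<and>
      (\<forall>i < length xs. uadj M (xs ! i) (xs ! ((i + 1) mod length xs))))"

end

theory Submission
  imports Defs
begin

lemma marked_sub: "marked_edges E w \<chi> \<subseteq> E"
  unfolding marked_edges_def marks_out_def by auto

lemma color_lemma:
  assumes M: "M = marked_edges E w \<chi>"
    and S: "S \<noteq> {}"
    and P: "\<forall>x\<in>S. (\<exists>y\<in>S. (x,y)\<in>M) \<and> (\<exists>z\<in>S. (z,x)\<in>M)"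
    and E_sub: "E \<subseteq> V \<times> V"
    and col_range: "\<forall>x\<in>V. \<chi> x \<in> {1, 2, 3}"
    and col_proper: "\<forall>(x, y)\<in>E. \<chi> x \<noteq> \<chi> y"
  shows False
proof -
  have ME: "M \<subseteq> E" using M marked_sub by blast
  have SV: "S \<subseteq> V" using P ME E_sub by blast
  have n1: "\<chi> x \<noteq> 1" if "x \<in> S" for x
  proof
    assume c: "\<chi> x = 1"
    obtain y where y: "y\<in>S" "(x,y)\<in>M" using P \<open>x\<in>S\<close> by blast
    obtain z where z: "z\<in>S" "(z,x)\<in>M" using P \<open>x\<in>S\<close> by blast
    have "\<chi> x \<noteq> \<chi> y" "\<chi> z \<noteq> \<chi> x" using y z ME col_proper by auto
    then have mo: "marks_out E w \<chi> x y" using y(2) c unfolding M marked_edges_def by auto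
    show False using z(2) c mo \<open>\<chi> z \<noteq> \<chi> x\<close> unfolding M marked_edges_def marks_out_def by auto
  qed
  have n2: "\<chi> x \<noteq> 2" if "x \<in> S" for x
  proof
    assume c: "\<chi> x = 2"
    obtain y where y: "y\<in>S" "(x,y)\<in>M" using P \<open>x\<in>S\<close> by blast
    obtain z where z: "z\<in>S" "(z,x)\<in>M" using P \<open>x\<in>S\<close> by blast
    have "\<chi> x \<noteq> \<chi> y" "\<chi> z \<noteq> \<chi> x" using y z ME col_proper by auto
    moreover have "\<chi> y \<noteq> 1" "\<chi> z \<noteq> 1" using n1 y z by auto
    moreover have "\<chi> z \<in> {1,2,3}" using z SV col_range by auto
    ultimately have z3: "\<chi> z = 3" using c by auto
    have mo: "marks_out E w \<chi> x y" using y(2) c \<open>\<chi> y \<noteq> 1\<close> \<open>\<chi> x \<noteq> \<chi> y\<close>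
      unfolding M marked_edges_def by auto
    show False using z(2) c mo z3 unfolding M marked_edges_def marks_out_def by auto
  qed
  obtain x where x: "x \<in> S" using S by blast
  obtain y where y: "y\<in>S" "(x,y)\<in>M" using P x by blast
  have "\<chi> x = 3" "\<chi> y = 3" using n1 n2 x y SV col_range by fastforce+
  moreover have "\<chi> x \<noteq> \<chi> y" using y ME col_proper by auto
  ultimately show False by simp
qed

theorem mainTheorem15:
  fixes V :: "'a set" and E :: "('a \<times> 'a) set"
    and w :: "'a \<times> 'a \<Rightarrow> real" and \<chi> :: "'a \<Rightarrow> nat"
  assumes finV: "finite V"
    and E_sub: "E \<subseteq> V \<times> V"
    and no_loops: "\<forall>x. (x, x) \<notin> E"
    and outdeg: "\<forall>x y z. (x, y) \<in> E \<and> (x, z) \<in> E \<longrightarrow> y = z"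
    and no_antiparallel: "\<forall>x y. (x, y) \<in> E \<longrightarrow> (y, x) \<notin> E"
    and w_pos: "\<forall>e\<in>E. w e > 0"
    and col_range: "\<forall>x\<in>V. \<chi> x \<in> {1, 2, 3}"
    and col_proper: "\<forall>(x, y)\<in>E. \<chi> x \<noteq> \<chi> y"
  shows "\<not> has_undirected_cycle (marked_edges E w \<chi>)"
proof
  define M where "M = marked_edges E w \<chi>"
  have ME: "M \<subseteq> E" using M_def marked_sub by blast
  assume "has_undirected_cycle (marked_edges E w \<chi>)"
  then obtain xs where len: "length xs \<ge> 3" and dist: "distinct xs"
    and cyc: "\<forall>i < length xs. uadj M (xs ! i) (xs ! ((i + 1) mod length xs))"
    unfolding has_undirected_cycle_def M_def by blast
  define n where "n = length xs"
  define nxt where "nxt i = Suc i mod n" for i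
  define prv where "prv i = (i + n - 1) mod n" for i
  define fwd where "fwd i \<longleftrightarrow> (xs!i, xs!(nxt i)) \<in> M" for i
  have n3: "n \<ge> 3" using len n_def by simp
  have nxt_lt: "nxt i < n" for i using n3 nxt_def by simp
  have prv_lt: "prv i < n" for i using n3 prv_def by simp
  have nxt_prv: "nxt (prv i) = i" if "i < n" for i
  proof -
    have "Suc ((i + n - 1) mod n) mod n = (i + n - 1 + 1) mod n"
      by (metis mod_Suc_eq Suc_eq_plus1)
    also have "\<dots> = (i + n) mod n" using n3 by simp
    also have "\<dots> = i" using that by simp
    finally show ?thesis unfolding nxt_def prv_def .
  qed
  have bwd: "\<not> fwd i \<Longrightarrow> (xs!(nxt i), xs!i) \<in> M" if "i < n" for i
    using cyc that unfolding fwd_def uadj_def nxt_def n_def by auto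
  have C: "\<not> fwd (nxt j)" if "j < n" "\<not> fwd j" for j
  proof
    assume f: "fwd (nxt j)"
    have e1: "(xs!(nxt j), xs!j) \<in> E" using bwd that ME by blast
    have e2: "(xs!(nxt j), xs!(nxt (nxt j))) \<in> E" using f ME fwd_def by blast
    have "xs!j = xs!(nxt (nxt j))" using e1 e2 outdeg by blast
    hence "j = nxt (nxt j)" using dist nxt_lt that(1) n_def by (simp add: nth_eq_iff_index_eq)
    moreover have "nxt (nxt j) = (j + 2) mod n" unfolding nxt_def by (simp add: mod_Suc_eq)
    ultimately have "j = (j+2) mod n" by simp
    then show False
    proof (cases "j + 2 < n")
      case True then show ?thesis using \<open>j = (j+2) mod n\<close> by simp
    next
      case False
      have "j + 2 - n < n" using that(1) n3 by simp
      hence "(j+2) mod n = j + 2 - n" using False le_mod_geq[of n "j+2"] by simp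
      then show ?thesis using \<open>j = (j+2) mod n\<close> n3 False by simp
    qed
  qed
  have "\<forall>x\<in>set xs. (\<exists>y\<in>set xs. (x,y)\<in>M) \<and> (\<exists>z\<in>set xs. (z,x)\<in>M)"
  proof (cases "\<exists>j0<n. \<not> fwd j0")
    case True
    then obtain j0 where j0: "j0 < n" "\<not> fwd j0" by blast
    have all: "\<not> fwd ((j0 + k) mod n)" for k
    proof (induction k)
      case 0 then show ?case using j0 by simp
    next
      case (Suc k)
      have "nxt ((j0 + k) mod n) = (j0 + Suc k) mod n" unfolding nxt_def by (simp add: mod_Suc_eq)
      then show ?case using C[OF _ Suc.IH] n3 by simp
    qed
    have nf: "\<not> fwd i" if "i < n" for i
    proof -
      have "(j0 + (i + n - j0)) mod n = i" using j0 that by simp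
      then show ?thesis using all[of "i + n - j0"] by simp
    qed
    show ?thesis
    proof
      fix x assume "x \<in> set xs"
      then obtain i where i: "i < n" "x = xs!i" by (auto simp: in_set_conv_nth n_def)
      have "(xs!i, xs!(prv i)) \<in> M" using bwd[OF prv_lt nf[OF prv_lt], of i] nxt_prv[OF i(1)] by simp
      moreover have "(xs!(nxt i), xs!i) \<in> M" using bwd[OF i(1) nf[OF i(1)]] .
      ultimately show "(\<exists>y\<in>set xs. (x,y)\<in>M) \<and> (\<exists>z\<in>set xs. (z,x)\<in>M)"
        using i prv_lt nxt_lt n_def by (metis nth_mem)
    qed
  next
    case False
    show ?thesis
    proof
      fix x assume "x \<in> set xs"
      then obtain i where i: "i < n" "x = xs!i" by (auto simp: in_set_conv_nth n_def)
      have "(xs!i, xs!(nxt i)) \<in> M" using False i(1) fwd_def by blast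
      moreover have "(xs!(prv i), xs!i) \<in> M" using False prv_lt[of i] fwd_def nxt_prv[OF i(1)] by metis
      ultimately show "(\<exists>y\<in>set xs. (x,y)\<in>M) \<and> (\<exists>z\<in>set xs. (z,x)\<in>M)"
        using i prv_lt nxt_lt n_def by (metis nth_mem)
    qed
  qed
  moreover have "set xs \<noteq> {}" using len by auto
  ultimately show False
    using color_lemma[OF M_def _ _ E_sub col_range col_proper] by blast
qed

end
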